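(* Let $n\ge 2$ and let $|\psi_1\rangle,|\psi_2\rangle\in S^{2n-1}$ be two non-equivalent quantum states, i.e. $|\psi_1\rangle\notin[|\psi_2\rangle]$. Then there exist $\varepsilon>0$ and a self-adjoint $n\times n$ matrix $H'$ with $\|H'\|_{HS}=1$ and $H'\neq I$ such that $$|\psi_1\rangle=e^{i\varepsilon H'}|\psi_2\rangle .$$ Moreover, neither $|\psi_1\rangle$ nor $|\psi_2\rangle$ is an eigenvector of $H'$.
   Context: $S^{2n-1}$ denotes the unit sphere of $\mathbb{C}^n$ with the standard inner product $\langle\cdot|\cdot\rangle$; its elements are (pure) quantum states. For $|\psi\rangle\in S^{2n-1}$ the equivalence class is $[|\psi\rangle]=\{e^{i\varrho}|\psi\rangle:\varrho\in\mathbb{R}\}$, and two states are equivalent if one lies in the equivalence class of the other. $\|\cdot\|_{HS}$ is the Hilbert–Schmidt norm. *)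

theory Defs
  imports "HOL-Analysis.Analysis"
begin

primrec matpow :: "complex^'n^'n \<Rightarrow> nat \<Rightarrow> complex^'n^'n" where
  "matpow A 0 = mat 1"
| "matpow A (Suc k) = A ** matpow A k"

definition mat_scale :: "complex \<Rightarrow> complex^'n^'n \<Rightarrow> complex^'n^'n" where
  "mat_scale c A = (\<chi> i j. c * A $ i $ j)"

definition mat_exp :: "complex^'n^'n \<Rightarrow> complex^'n^'n" where
  "mat_exp A = (\<Sum>k. (1 / fact k) *\<^sub>R matpow A k)"

definition hermitian :: "complex^'n^'n \<Rightarrow> bool" where
  "hermitian A \<longleftrightarrow> (\<forall>i j. A $ i $ j = cnj (A $ j $ i))"

definition hs_norm :: "complex^'n^'n \<Rightarrow> real" where
  "hs_norm A = sqrt (\<Sum>i\<in>UNIV. \<Sum>j\<in>UNIV. (cmod (A $ i $ j))\<^sup>2)"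

definition is_eigenvector :: "complex^'n^'n \<Rightarrow> complex^'n \<Rightarrow> bool" where
  "is_eigenvector A v \<longleftrightarrow> v \<noteq> 0 \<and> (\<exists>c. A *v v = c *s v)"

definition phase_class :: "complex^'n \<Rightarrow> (complex^'n) set" where
  "phase_class \<psi> = {exp (\<i> * complex_of_real \<rho>) *s \<psi> | \<rho>. True}"

end

theory Submission
  imports Defs
begin

definition cinner :: "complex^'n \<Rightarrow> complex^'n \<Rightarrow> complex" where
  "cinner x y = (\<Sum>i\<in>UNIV. x$i * cnj (y$i))"

lemma cinner_add_left: "cinner (x + y) z = cinner x z + cinner y z"
  by (simp add: cinner_def sum.distrib distrib_right)

lemma cinner_diff_left: "cinner (x - y) z = cinner x z - cinner y z"
  by (simp add: cinner_def sum_subtractf left_diff_distrib)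

lemma cinner_scale_left: "cinner (c *s x) z = c * cinner x z"
  by (simp add: cinner_def sum_distrib_left mult.assoc)

lemma cinner_scale_right: "cinner x (c *s z) = cnj c * cinner x z"
  by (simp add: cinner_def sum_distrib_left mult_ac)

lemma cinner_sym: "cinner y x = cnj (cinner x y)"
  by (simp add: cinner_def mult.commute)

lemma cinner_self: "cinner x x = complex_of_real ((norm x)^2)"
proof -
  have "(norm x)^2 = (\<Sum>i\<in>UNIV. (cmod (x$i))^2)"
    unfolding norm_vec_def L2_set_def by (simp add: sum_nonneg)
  then show ?thesis
    by (simp add: cinner_def flip: complex_norm_square)
qed

definition outer :: "complex^'n \<Rightarrow> complex^'n \<Rightarrow> complex^'n^'n" where
  "outer u v = (\<chi> i j. u$i * cnj (v$j))"

lemma outer_mult: "outer u v *v x = cinner x v *s u"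
  by (simp add: outer_def matrix_vector_mult_def cinner_def vec_eq_iff sum_distrib_left mult_ac)

lemma mat_scale_mult: "mat_scale c A *v x = c *s (A *v x)"
  by (simp add: mat_scale_def matrix_vector_mult_def vec_eq_iff sum_distrib_left mult_ac)

definition Kmat :: "complex^'n \<Rightarrow> complex^'n \<Rightarrow> complex \<Rightarrow> complex \<Rightarrow> complex \<Rightarrow> complex \<Rightarrow> complex^'n^'n" where
  "Kmat e1 e2 a b c d = mat_scale a (outer e1 e1) + mat_scale b (outer e1 e2)
     + mat_scale c (outer e2 e1) + mat_scale d (outer e2 e2)"

lemma Kmat_entry: "Kmat e1 e2 a b c d $ i $ j = a * (e1$i * cnj (e1$j)) + b * (e1$i * cnj (e2$j))
   + c * (e2$i * cnj (e1$j)) + d * (e2$i * cnj (e2$j))"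
  by (simp add: Kmat_def mat_scale_def outer_def)

lemma Kmat_mult: "Kmat e1 e2 a b c d *v x =
   (a * cinner x e1 + b * cinner x e2) *s e1 + (c * cinner x e1 + d * cinner x e2) *s e2"
  by (simp add: Kmat_def matrix_vector_mult_add_rdistrib mat_scale_mult outer_mult
       vec_eq_iff algebra_simps)


lemma Kmat_add: "Kmat e1 e2 a b c d + Kmat e1 e2 a' b' c' d' = Kmat e1 e2 (a+a') (b+b') (c+c') (d+d')"
  by (simp add: vec_eq_iff Kmat_entry algebra_simps)

lemma Kmat_scaleR: "r *\<^sub>R Kmat e1 e2 a b c d = Kmat e1 e2 (of_real r * a) (of_real r * b) (of_real r * c) (of_real r * d)"
  apply (simp add: vec_eq_iff Kmat_entry)
  apply (simp add: scaleR_conv_of_real algebra_simps)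
  done

lemma Kmat_scale: "mat_scale z (Kmat e1 e2 a b c d) = Kmat e1 e2 (z * a) (z * b) (z * c) (z * d)"
  by (simp add: vec_eq_iff Kmat_entry algebra_simps mat_scale_def)

lemma Kmat_hermitian:
  assumes "cnj a = a" "cnj d = d" "cnj b = c"
  shows "hermitian (Kmat e1 e2 a b c d)"
  unfolding hermitian_def Kmat_entry
proof (intro allI)
  fix i j
  have c: "cnj c = b" using assms(3) by (metis complex_cnj_cnj)
  show "a * (e1 $ i * cnj (e1 $ j)) + b * (e1 $ i * cnj (e2 $ j)) + c * (e2 $ i * cnj (e1 $ j)) + d * (e2 $ i * cnj (e2 $ j)) =
    cnj (a * (e1 $ j * cnj (e1 $ i)) + b * (e1 $ j * cnj (e2 $ i)) + c * (e2 $ j * cnj (e1 $ i)) + d * (e2 $ j * cnj (e2 $ i)))"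
    using assms c by (simp add: algebra_simps)
qed

definition uco :: "real \<Rightarrow> nat \<Rightarrow> real" where
  "uco \<theta> k = (if even k then (-1)^(k div 2) * \<theta>^k else 0)"

definition vco :: "real \<Rightarrow> nat \<Rightarrow> real" where
  "vco \<theta> k = (if odd k then (-1)^(k div 2) * \<theta>^(k - 1) else 0)"

lemma uco_SS: "uco \<theta> (Suc (Suc m)) = - (\<theta>^2) * vco \<theta> (Suc m)"
proof (cases "even m")
  case True
  then obtain j where "m = 2*j" by blast
  then show ?thesis by (simp add: uco_def vco_def power_add power2_eq_square)
next
  case False
  then obtain j where "m = 2*j+1" using oddE by blast
  then show ?thesis by (simp add: uco_def vco_def)
qed

lemma vco_SS: "vco \<theta> (Suc (Suc m)) = uco \<theta> (Suc m)"
proof (cases "even m")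
  case True
  then obtain j where "m = 2*j" by blast
  then show ?thesis by (simp add: uco_def vco_def)
next
  case False
  then obtain j where "m = 2*j+1" using oddE by blast
  then show ?thesis by (simp add: uco_def vco_def)
qed

lemma uco_fact: "uco \<theta> k / fact k = cos_coeff k * \<theta>^k"
  by (simp add: uco_def cos_coeff_def)

lemma vco_fact: assumes "\<theta> \<noteq> 0" shows "vco \<theta> k / fact k = sin_coeff k * \<theta>^k / \<theta>"
proof (cases "even k")
  case True
  then show ?thesis by (simp add: vco_def sin_coeff_def)
next
  case False
  then obtain j where k: "k = 2*j+1" using oddE by blast
  then show ?thesis using assms by (simp add: vco_def sin_coeff_def)
qed

locale orthon =
  fixes e1 e2 :: "complex^'n"
  assumes n1: "cinner e1 e1 = 1" and n2: "cinner e2 e2 = 1" and o12: "cinner e1 e2 = 0"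
begin

lemma o21: "cinner e2 e1 = 0"
  using o12 cinner_sym[of e2 e1] by simp

lemma coef1: "cinner (p *s e1 + q *s e2) e1 = p"
  by (simp add: cinner_add_left cinner_scale_left n1 o21)

lemma coef2: "cinner (p *s e1 + q *s e2) e2 = q"
  by (simp add: cinner_add_left cinner_scale_left n2 o12)

lemma Kmat_comp: "Kmat e1 e2 a b c d ** Kmat e1 e2 a' b' c' d' =
   Kmat e1 e2 (a*a' + b*c') (a*b' + b*d') (c*a' + d*c') (c*b' + d*d')"
proof (subst matrix_eq, intro allI)
  fix x
  show "(Kmat e1 e2 a b c d ** Kmat e1 e2 a' b' c' d') *v x =
    Kmat e1 e2 (a*a' + b*c') (a*b' + b*d') (c*a' + d*c') (c*b' + d*d') *v x"
    unfolding matrix_vector_mul_assoc[symmetric]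
    by (simp only: Kmat_mult coef1 coef2) (simp add: vec_eq_iff algebra_simps)
qed

lemma cinner_pair: "cinner (p *s e1 + q *s e2) (r *s e1 + s *s e2) = p * cnj r + q * cnj s"
proof -
  have a: "cinner e1 (r *s e1 + s *s e2) = cnj r" using cinner_sym[of e1 "r *s e1 + s *s e2"] coef1 by simp
  have b: "cinner e2 (r *s e1 + s *s e2) = cnj s" using cinner_sym[of e2 "r *s e1 + s *s e2"] coef2 by simp
  show ?thesis by (simp add: cinner_add_left cinner_scale_left a b)
qed

lemma eig:
  assumes "Kmat e1 e2 a b c d *v (p *s e1 + q *s e2) = z *s (p *s e1 + q *s e2)"
  shows "a*p + b*q = z*p" "c*p + d*q = z*q"
proof -
  have "z *s (p *s e1 + q *s e2) = (z*p) *s e1 + (z*q) *s e2" by (simp add: vec_eq_iff algebra_simps)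
  then have E: "(a*p + b*q) *s e1 + (c*p + d*q) *s e2 = (z*p) *s e1 + (z*q) *s e2"
    using assms by (simp only: Kmat_mult coef1 coef2)
  show "a*p + b*q = z*p" using arg_cong[OF E, of "\<lambda>v. cinner v e1"] by (simp only: coef1)
  show "c*p + d*q = z*q" using arg_cong[OF E, of "\<lambda>v. cinner v e2"] by (simp only: coef2)
qed

lemma hs_K:
  fixes K :: "complex^'n^'n"
  assumes herm: "hermitian K" and sq: "K ** K = Kmat e1 e2 d 0 0 d"
  shows "complex_of_real (\<Sum>i\<in>UNIV. \<Sum>j\<in>UNIV. (cmod (K$i$j))\<^sup>2) = 2*d"
proof -
  have c: "\<And>i j. cnj (K$i$j) = K$j$i" using herm by (metis complex_cnj_cnj hermitian_def)
  have "complex_of_real (\<Sum>i\<in>UNIV. \<Sum>j\<in>UNIV. (cmod (K$i$j))\<^sup>2) = (\<Sum>i\<in>UNIV. \<Sum>j\<in>UNIV. K$i$j * cnj (K$i$j))"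
    by (simp flip: complex_norm_square)
  also have "\<dots> = (\<Sum>i\<in>UNIV. (K ** K)$i$i)"
    by (simp add: c matrix_matrix_mult_def)
  also have "\<dots> = (\<Sum>i\<in>UNIV. d * (e1$i * cnj (e1$i)) + d * (e2$i * cnj (e2$i)))"
    by (simp add: sq Kmat_entry)
  also have "\<dots> = d * cinner e1 e1 + d * cinner e2 e2"
    by (simp add: cinner_def sum.distrib sum_distrib_left)
  finally show ?thesis by (simp add: n1 n2)
qed

abbreviation "PP \<equiv> Kmat e1 e2 1 0 0 1"

lemma mat_exp_K:
  fixes \<theta> :: real
  assumes th: "\<theta> > 0"
    and h1: "x11*x11 + x12*x21 = - of_real(\<theta>^2)" and h2: "x11*x12 + x12*x22 = 0"
    and h3: "x21*x11 + x22*x21 = 0" and h4: "x21*x12 + x22*x22 = - of_real(\<theta>^2)"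
  shows "mat_exp (Kmat e1 e2 x11 x12 x21 x22) =
     (mat 1 - PP) + cos \<theta> *\<^sub>R PP + (sin \<theta> / \<theta>) *\<^sub>R Kmat e1 e2 x11 x12 x21 x22"
proof -
  define A where "A = Kmat e1 e2 x11 x12 x21 x22"
  have pow: "matpow A (Suc m) = Kmat e1 e2
      (of_real (uco \<theta> (Suc m)) + of_real (vco \<theta> (Suc m)) * x11) (of_real (vco \<theta> (Suc m)) * x12)
      (of_real (vco \<theta> (Suc m)) * x21) (of_real (uco \<theta> (Suc m)) + of_real (vco \<theta> (Suc m)) * x22)" for m
  proof (induction m)
    case 0
    show ?case by (simp add: uco_def vco_def A_def)
  next
    case (Suc m)
    define U where "U = complex_of_real (uco \<theta> (Suc m))"
    define V where "V = complex_of_real (vco \<theta> (Suc m))"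
    have U': "complex_of_real (uco \<theta> (Suc (Suc m))) = - of_real (\<theta>^2) * V"
      by (simp add: uco_SS V_def)
    have V': "complex_of_real (vco \<theta> (Suc (Suc m))) = U"
      by (simp add: vco_SS U_def)
    have "matpow A (Suc (Suc m)) = A ** matpow A (Suc m)" by simp
    also have "\<dots> = Kmat e1 e2 (x11 * (U + V * x11) + x12 * (V * x21)) (x11 * (V * x12) + x12 * (U + V * x22))
        (x21 * (U + V * x11) + x22 * (V * x21)) (x21 * (V * x12) + x22 * (U + V * x22))"
      unfolding Suc.IH unfolding A_def U_def V_def by (rule Kmat_comp)
    also have "\<dots> = Kmat e1 e2 (- of_real (\<theta>^2) * V + U * x11) (U * x12) (U * x21) (- of_real (\<theta>^2) * V + U * x22)"
    proof -
      have a: "x11 * (U + V * x11) + x12 * (V * x21) = - of_real (\<theta>^2) * V + U * x11"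
      proof -
        have "x11 * (U + V * x11) + x12 * (V * x21) = U * x11 + V * (x11*x11 + x12*x21)" by (simp add: algebra_simps)
        then show ?thesis by (simp only: h1) (simp add: algebra_simps)
      qed
      have b: "x11 * (V * x12) + x12 * (U + V * x22) = U * x12"
      proof -
        have "x11 * (V * x12) + x12 * (U + V * x22) = U * x12 + V * (x11*x12 + x12*x22)" by (simp add: algebra_simps)
        then show ?thesis by (simp add: h2)
      qed
      have c: "x21 * (U + V * x11) + x22 * (V * x21) = U * x21"
      proof -
        have "x21 * (U + V * x11) + x22 * (V * x21) = U * x21 + V * (x21*x11 + x22*x21)" by (simp add: algebra_simps)
        then show ?thesis by (simp add: h3)
      qed
      have d: "x21 * (V * x12) + x22 * (U + V * x22) = - of_real (\<theta>^2) * V + U * x22"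
      proof -
        have "x21 * (V * x12) + x22 * (U + V * x22) = U * x22 + V * (x21*x12 + x22*x22)" by (simp add: algebra_simps)
        then show ?thesis by (simp only: h4) (simp add: algebra_simps)
      qed
      show ?thesis by (simp only: a b c d)
    qed
    finally show ?case by (simp only: U' V')
  qed
  have all: "matpow A k = (if k = 0 then mat 1 - PP else 0) + uco \<theta> k *\<^sub>R PP + vco \<theta> k *\<^sub>R A" for k
  proof (cases k)
    case 0
    then show ?thesis by (simp add: uco_def vco_def)
  next
    case (Suc m)
    then show ?thesis using pow[of m] unfolding A_def by (simp add: Kmat_scaleR Kmat_add del: matpow.simps)
  qed
  have trm: "(1 / fact k) *\<^sub>R matpow A k = (\<lambda>k. (if k = 0 then mat 1 - PP else 0) + (cos_coeff k *\<^sub>R \<theta>^k) *\<^sub>R PP)  k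
      + (sin_coeff k *\<^sub>R \<theta>^k / \<theta>) *\<^sub>R A" for k
  proof -
    have "(1 / fact k) *\<^sub>R matpow A k = (1 / fact k) *\<^sub>R (if k = 0 then mat 1 - PP else 0)
      + (uco \<theta> k / fact k) *\<^sub>R PP + (vco \<theta> k / fact k) *\<^sub>R A"
      unfolding all by (simp add: scaleR_add_right)
    also have "\<dots> = (if k = 0 then mat 1 - PP else 0) + (cos_coeff k *\<^sub>R \<theta>^k) *\<^sub>R PP
      + (sin_coeff k *\<^sub>R \<theta>^k / \<theta>) *\<^sub>R A"
      using th by (simp add: uco_fact vco_fact)
    finally show ?thesis by simp
  qed
  have S1: "(\<lambda>k. if k = 0 then mat 1 - PP else 0) sums (mat 1 - PP)"
    using sums_single[of 0 "\<lambda>_. mat 1 - PP"] by simp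
  have S2: "(\<lambda>k. (cos_coeff k *\<^sub>R \<theta>^k) *\<^sub>R PP) sums (cos \<theta> *\<^sub>R PP)"
    by (rule sums_scaleR_left[OF cos_converges])
  have S3: "(\<lambda>k. (sin_coeff k *\<^sub>R \<theta>^k / \<theta>) *\<^sub>R A) sums ((sin \<theta> / \<theta>) *\<^sub>R A)"
    by (rule sums_scaleR_left[OF sums_divide[OF sin_converges]])
  have "(\<lambda>k. (1 / fact k) *\<^sub>R matpow A k) sums ((mat 1 - PP) + cos \<theta> *\<^sub>R PP + (sin \<theta> / \<theta>) *\<^sub>R A)"
    unfolding trm by (rule sums_add[OF sums_add[OF S1 S2] S3])
  then show ?thesis unfolding mat_exp_def A_def[symmetric] by (rule sums_unique[symmetric])
qed

end


lemma scaleR_mv: "(r *\<^sub>R M) *v v = complex_of_real r *s (M *v v)"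
  apply (simp add: matrix_vector_mult_def vec_eq_iff)
  apply (simp add: scaleR_conv_of_real sum_distrib_left mult.assoc)
  done

theorem lemma1:
  fixes \<psi>1 \<psi>2 :: "complex^'n"
  assumes "CARD('n) \<ge> 2"
    and "norm \<psi>1 = 1" and "norm \<psi>2 = 1"
    and "\<psi>1 \<notin> phase_class \<psi>2"
  shows "\<exists>\<epsilon>::real. \<exists>H :: complex^'n^'n. \<epsilon> > 0 \<and> hermitian H \<and> hs_norm H = 1 \<and> H \<noteq> mat 1
     \<and> \<psi>1 = mat_exp (mat_scale (\<i> * complex_of_real \<epsilon>) H) *v \<psi>2
     \<and> \<not> is_eigenvector H \<psi>1 \<and> \<not> is_eigenvector H \<psi>2"
proof -
  define e1 where "e1 = \<psi>2"
  define a where "a = cinner \<psi>1 \<psi>2"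
  define w where "w = \<psi>1 - a *s \<psi>2"
  have n22: "cinner \<psi>2 \<psi>2 = 1" using assms(3) by (simp add: cinner_self)
  have n11: "cinner \<psi>1 \<psi>1 = 1" using assms(2) by (simp add: cinner_self)
  have w2: "cinner w \<psi>2 = 0" by (simp add: w_def cinner_diff_left cinner_scale_left n22 a_def)
  have wnz: "w \<noteq> 0"
  proof
    assume "w = 0"
    then have p1: "\<psi>1 = a *s \<psi>2" by (simp add: w_def)
    have "1 = cnj a * a" using n11 unfolding p1 by (simp add: cinner_scale_left cinner_scale_right n22)
    then have "complex_of_real ((cmod a)^2) = 1" using complex_norm_square[of a] mult.commute[of a "cnj a"] by simp
    then have "(cmod a)^2 = 1" using of_real_eq_1_iff by blast
    then have "cmod a = 1" using norm_ge_zero[of a] by (auto simp add: power2_eq_1_iff)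
    then have "exp (\<i> * complex_of_real (Arg a)) = a"
      using complex_norm_eq_1_exp_eq by blast
    then have "\<psi>1 \<in> phase_class \<psi>2" unfolding phase_class_def p1 by (metis (mono_tags, lifting) mem_Collect_eq)
    then show False using assms(4) by simp
  qed
  define b where "b = norm w"
  have bpos: "b > 0" using wnz by (simp add: b_def)
  define e2 where "e2 = complex_of_real (1/b) *s w"
  have ww: "cinner w w = complex_of_real (b^2)" by (simp add: b_def cinner_self)
  have ON: "orthon e1 e2"
  proof
    show "cinner e1 e1 = 1" using n22 by (simp add: e1_def)
    show "cinner e2 e2 = 1" using bpos
      by (simp add: e2_def cinner_scale_left cinner_scale_right ww power2_eq_square)
    show "cinner e1 e2 = 0" using w2 cinner_sym[of \<psi>2 w]
      by (simp add: e1_def e2_def cinner_scale_right)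
  qed
  have psi1: "\<psi>1 = a *s e1 + complex_of_real b *s e2"
    using bpos by (simp add: e1_def e2_def w_def vec_eq_iff)
  interpret orthon e1 e2 by (rule ON)
  define c0 where "c0 = Re a"
  define t where "t = Im a"
  have a_eq: "a = complex_of_real c0 + \<i> * complex_of_real t"
    by (simp add: complex_eq_iff c0_def t_def)
  have "1 = a * cnj a + complex_of_real b * cnj (complex_of_real b)"
    using n11 unfolding psi1 cinner_pair by simp
  then have "complex_of_real (c0^2 + t^2 + b^2) = 1"
    by (simp add: complex_mult_cnj c0_def t_def power2_eq_square)
  then have nrm: "c0^2 + t^2 + b^2 = 1" using of_real_eq_1_iff by blast
  define s where "s = sqrt (t^2 + b^2)"
  have spos: "s > 0" using bpos by (simp add: s_def add_nonneg_pos)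
  have s2: "s^2 = t^2 + b^2" by (simp add: s_def)
  have c0sq: "c0^2 \<le> 1" using nrm by (smt (verit) zero_le_power2)
  then have "\<bar>c0\<bar> \<le> 1" using abs_square_le_1 by blast
  then have c0b: "-1 \<le> c0" "c0 \<le> 1" by auto
  define \<theta> where "\<theta> = arccos c0"
  have cth: "cos \<theta> = c0" using c0b by (simp add: \<theta>_def)
  have sth: "sin \<theta> = s" using c0b nrm by (simp add: \<theta>_def sin_arccos s_def algebra_simps)
  have thpos: "\<theta> > 0"
  proof -
    have "\<theta> \<ge> 0" using arccos_bounded[OF c0b] by (simp add: \<theta>_def)
    moreover have "\<theta> \<noteq> 0" using sth spos by auto
    ultimately show ?thesis by simp
  qed
  define r where "r = 1 / (s * sqrt 2)"
  have rpos: "r > 0" using spos by (simp add: r_def)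
  have r2: "(t*r)^2 + (b*r)^2 = 1/2"
  proof -
    have "(t*r)^2 + (b*r)^2 = s^2 * r^2" using s2 by (simp add: algebra_simps power2_eq_square)
    also have "\<dots> = 1/2" using spos by (simp add: r_def power2_eq_square field_simps)
    finally show ?thesis .
  qed
  define h11 where "h11 = complex_of_real (t*r)"
  define h12 where "h12 = \<i> * complex_of_real (b*r)"
  define h21 where "h21 = - \<i> * complex_of_real (b*r)"
  define h22 where "h22 = - complex_of_real (t*r)"
  define H where "H = Kmat e1 e2 h11 h12 h21 h22"
  have q1: "h11*h11 + h12*h21 = 1/2"
  proof -
    have "h11*h11 + h12*h21 = complex_of_real ((t*r)^2 + (b*r)^2)"
      by (simp add: h11_def h12_def h21_def power2_eq_square algebra_simps)
    then show ?thesis using r2 by simp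
  qed
  have q2: "h11*h12 + h12*h22 = 0" by (simp add: h11_def h12_def h22_def algebra_simps)
  have q3: "h21*h11 + h22*h21 = 0" by (simp add: h11_def h21_def h22_def algebra_simps)
  have q4: "h21*h12 + h22*h22 = 1/2"
  proof -
    have "h21*h12 + h22*h22 = complex_of_real ((t*r)^2 + (b*r)^2)"
      by (simp add: h22_def h12_def h21_def power2_eq_square algebra_simps)
    then show ?thesis using r2 by simp
  qed
  have Hsq: "H ** H = Kmat e1 e2 (1/2) 0 0 (1/2)"
    unfolding H_def Kmat_comp q1 q2 q3 q4 ..
  have herm: "hermitian H" unfolding H_def
    by (rule Kmat_hermitian) (simp_all add: h11_def h12_def h21_def h22_def)
  have hs: "hs_norm H = 1"
  proof -
    have "complex_of_real (\<Sum>i\<in>UNIV. \<Sum>j\<in>UNIV. (cmod (H$i$j))\<^sup>2) = 2 * (1/2)"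
      by (rule hs_K[OF herm Hsq])
    then have "(\<Sum>i\<in>UNIV. \<Sum>j\<in>UNIV. (cmod (H$i$j))\<^sup>2) = 1" using of_real_eq_1_iff by fastforce
    then show ?thesis by (simp add: hs_norm_def)
  qed
  define \<epsilon> where "\<epsilon> = sqrt 2 * \<theta>"
  have epos: "\<epsilon> > 0" using thpos by (simp add: \<epsilon>_def)
  define z where "z = \<i> * complex_of_real \<epsilon>"
  have zz: "z * z = - complex_of_real (2 * \<theta>^2)"
  proof -
    have "z * z = - complex_of_real (\<epsilon> * \<epsilon>)" by (simp add: z_def algebra_simps)
    moreover have "\<epsilon> * \<epsilon> = 2 * \<theta>^2" by (simp add: \<epsilon>_def power2_eq_square algebra_simps)
    ultimately show ?thesis by simp
  qed
  have sc: "mat_scale z H = Kmat e1 e2 (z*h11) (z*h12) (z*h21) (z*h22)"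
    unfolding H_def by (rule Kmat_scale)
  have c1: "(z*h11)*(z*h11) + (z*h12)*(z*h21) = - complex_of_real (\<theta>^2)"
  proof -
    have "(z*h11)*(z*h11) + (z*h12)*(z*h21) = (z*z) * (h11*h11 + h12*h21)" by (simp add: algebra_simps)
    then show ?thesis unfolding q1 zz by simp
  qed
  have c2: "(z*h11)*(z*h12) + (z*h12)*(z*h22) = 0"
  proof -
    have "(z*h11)*(z*h12) + (z*h12)*(z*h22) = (z*z) * (h11*h12 + h12*h22)" by (simp add: algebra_simps)
    then show ?thesis unfolding q2 by simp
  qed
  have c3: "(z*h21)*(z*h11) + (z*h22)*(z*h21) = 0"
  proof -
    have "(z*h21)*(z*h11) + (z*h22)*(z*h21) = (z*z) * (h21*h11 + h22*h21)" by (simp add: algebra_simps)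
    then show ?thesis unfolding q3 by simp
  qed
  have c4: "(z*h21)*(z*h12) + (z*h22)*(z*h22) = - complex_of_real (\<theta>^2)"
  proof -
    have "(z*h21)*(z*h12) + (z*h22)*(z*h22) = (z*z) * (h21*h12 + h22*h22)" by (simp add: algebra_simps)
    then show ?thesis unfolding q4 zz by simp
  qed
  have expo: "mat_exp (mat_scale z H) = (mat 1 - PP) + cos \<theta> *\<^sub>R PP + (sin \<theta> / \<theta>) *\<^sub>R Kmat e1 e2 (z*h11) (z*h12) (z*h21) (z*h22)"
    unfolding sc by (rule mat_exp_K[OF thpos c1 c2 c3 c4])
  have e1pair: "e1 = 1 *s e1 + 0 *s e2" by (simp add: vec_eq_iff)
  have Pe1: "PP *v e1 = e1" by (simp add: Kmat_mult n1 o12 vec_eq_iff)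
  have Ke1: "Kmat e1 e2 (z*h11) (z*h12) (z*h21) (z*h22) *v e1 = (z*h11) *s e1 + (z*h21) *s e2"
    by (simp add: Kmat_mult n1 o12)
  have "mat_exp (mat_scale z H) *v \<psi>2 =
      (complex_of_real c0 + complex_of_real (s/\<theta>) * (z*h11)) *s e1 + (complex_of_real (s/\<theta>) * (z*h21)) *s e2"
    unfolding expo e1_def[symmetric]
    apply (simp only: matrix_vector_mult_add_rdistrib matrix_vector_mult_diff_rdistrib scaleR_mv Pe1 Ke1 cth sth
        matrix_vector_mul_lid)
    apply (simp add: vec_eq_iff algebra_simps)
    done
  also have "\<dots> = a *s e1 + complex_of_real b *s e2"
  proof -
    have k: "s/\<theta> * \<epsilon> * r = 1" using spos thpos by (simp add: r_def \<epsilon>_def field_simps)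
    have "complex_of_real (s/\<theta>) * (z*h11) = \<i> * complex_of_real ((s/\<theta> * \<epsilon> * r) * t)"
      by (simp add: z_def h11_def algebra_simps)
    also have "\<dots> = \<i> * complex_of_real t" by (simp only: k mult_1_left)
    finally have 1: "complex_of_real c0 + complex_of_real (s/\<theta>) * (z*h11) = a" using a_eq by simp
    have "complex_of_real (s/\<theta>) * (z*h21) = complex_of_real ((s/\<theta> * \<epsilon> * r) * b)"
      by (simp add: z_def h21_def algebra_simps)
    also have "\<dots> = complex_of_real b" by (simp only: k mult_1_left)
    finally have 2: "complex_of_real (s/\<theta>) * (z*h21) = complex_of_real b" .
    show ?thesis by (simp only: 1 2)
  qed
  finally have main: "\<psi>1 = mat_exp (mat_scale (\<i> * complex_of_real \<epsilon>) H) *v \<psi>2"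
    using psi1 by (simp add: z_def)
  have ne2: "\<not> is_eigenvector H \<psi>2"
  proof
    assume "is_eigenvector H \<psi>2"
    then obtain c where "H *v \<psi>2 = c *s \<psi>2" by (auto simp: is_eigenvector_def)
    then have "Kmat e1 e2 h11 h12 h21 h22 *v (1 *s e1 + 0 *s e2) = c *s (1 *s e1 + 0 *s e2)"
      unfolding H_def e1_def[symmetric] using e1pair by simp
    from eig(2)[OF this] have "h21 = 0" by simp
    then show False using bpos rpos by (simp add: h21_def)
  qed
  have ne1: "\<not> is_eigenvector H \<psi>1"
  proof
    assume "is_eigenvector H \<psi>1"
    then obtain c where "H *v \<psi>1 = c *s \<psi>1" by (auto simp: is_eigenvector_def)
    then have E: "Kmat e1 e2 h11 h12 h21 h22 *v (a *s e1 + complex_of_real b *s e2) = c *s (a *s e1 + complex_of_real b *s e2)"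
      unfolding H_def psi1 by simp
    define B where "B = complex_of_real b"
    have E1: "h11*a + h12*B = c*a" using eig(1)[OF E] by (simp add: B_def)
    have E2: "h21*a + h22*B = c*B" using eig(2)[OF E] by (simp add: B_def)
    have LR: "(h11*a + h12*B) * B = (h21*a + h22*B) * a" unfolding E1 E2 by (simp add: algebra_simps)
    have "Im ((h11*a + h12*B) * B) - Im ((h21*a + h22*B) * a) = r*b*(c0^2+t^2+b^2)"
      by (simp add: a_eq B_def h11_def h12_def h21_def h22_def algebra_simps power2_eq_square)
    then have "r*b*(c0^2+t^2+b^2) = 0" using LR by simp
    then show False using nrm rpos bpos by simp
  qed
  have Hn1: "H \<noteq> mat 1"
  proof
    assume "H = mat 1"
    then have "H *v \<psi>2 = 1 *s \<psi>2" by (simp only: matrix_vector_mul_lid) (simp add: vec_eq_iff)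
    moreover have "\<psi>2 \<noteq> 0" using assms(3) by auto
    ultimately have "is_eigenvector H \<psi>2" unfolding is_eigenvector_def by blast
    then show False using ne2 by simp
  qed
  show ?thesis using epos herm hs Hn1 main ne1 ne2 by blast
qed

end
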